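(* Let $h_i$ be a strictly convex regularizer on $\mathcal{X}_i$ such that $\nabla h_i^*(y_i)>\mathbf{0}$ (coordinatewise) for all $y_i$. Then the map $g_i(x_i)=\nabla h_i(x_i)-[\nabla h_i(x_i)]_1\cdot\mathbf{1}$ is a bijection between the relative interior of $\mathcal{X}_i$ and $\mathcal{Y}_i=\{y_i\in\mathbb{R}^{S_i}: y_{i1}=0\}$.
   Context: $\mathcal{X}_i=\{x_i\in\mathbb{R}^{S_i}_{\ge0}:\sum_{s}x_{is}=1\}$ is the probability simplex; $\mathbf{1}$ is the all-ones vector and $[v]_1$ the first coordinate of $v$. $h_i$ is strictly convex and differentiable on the relative interior of $\mathcal{X}_i$ (gradient taken in $\mathbb{R}^{S_i}$); the learning rate is absorbed into $h_i$. Its convex conjugate is $h_i^*(y_i)=\sup_{x_i\in\mathcal{X}_i}\{\langle y_i,x_i\rangle-h_i(x_i)\}$, and $\nabla h_i^*(y_i)=\arg\max_{x_i\in\mathcal{X}_i}\{\langle y_i,x_i\rangle-h_i(x_i)\}$. *)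

theory Defs
  imports "HOL-Analysis.Analysis"
begin

definition prob_simplex :: "(real ^ 'n::finite) set" where
  "prob_simplex = {x. (\<forall>s. 0 \<le> x $ s) \<and> sum (\<lambda>s. x $ s) UNIV = 1}"

definition strictly_convex_on :: "'a::real_vector set \<Rightarrow> ('a \<Rightarrow> real) \<Rightarrow> bool" where
  "strictly_convex_on X h \<longleftrightarrow> convex X \<and>
     (\<forall>x\<in>X. \<forall>y\<in>X. \<forall>t::real. x \<noteq> y \<and> 0 < t \<and> t < 1 \<longrightarrow>
        h ((1 - t) *\<^sub>R x + t *\<^sub>R y) < (1 - t) * h x + t * h y)"

text \<open>x is the gradient of the convex conjugate h^* at y, i.e. x attains the
  maximum of <y,x> - h(x) over the simplex.\<close>
definition is_conj_grad :: "((real ^ 'n::finite) \<Rightarrow> real) \<Rightarrow> real ^ 'n \<Rightarrow> real ^ 'n \<Rightarrow> bool" where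
  "is_conj_grad h y x \<longleftrightarrow> is_arg_max (\<lambda>z. y \<bullet> z - h z) (\<lambda>z. z \<in> prob_simplex) x"

end

theory Submission
  imports Defs
begin

lemma line_deriv:
  fixes h :: "real ^ 'n::finite \<Rightarrow> real"
  assumes "GDERIV h x :> g"
  shows "((\<lambda>t. h (x + t *\<^sub>R d)) has_real_derivative (g \<bullet> d)) (at 0)"
proof -
  have L: "((\<lambda>t::real. x + t *\<^sub>R d) has_derivative (\<lambda>t. t *\<^sub>R d)) (at 0)"
    by (auto intro!: derivative_eq_intros)
  have H: "(h has_derivative (\<lambda>v. v \<bullet> g)) (at ((\<lambda>t::real. x + t *\<^sub>R d) 0))"
    using assms by (simp add: gderiv_def)
  have "((\<lambda>t. h (x + t *\<^sub>R d)) has_derivative (\<lambda>t. (t *\<^sub>R d) \<bullet> g)) (at 0)"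
    using has_derivative_compose[OF L H] by (simp add: o_def)
  then show ?thesis
    by (rule has_derivative_imp_has_field_derivative) (simp add: inner_commute)
qed

lemma grad_ineq:
  fixes h :: "real ^ 'n::finite \<Rightarrow> real"
  assumes strict: "strictly_convex_on prob_simplex h"
    and xS: "x \<in> prob_simplex" and zS: "z \<in> prob_simplex"
    and G: "GDERIV h x :> g"
  shows "g \<bullet> (z - x) \<le> h z - h x"
proof -
  define d where "d = z - x"
  have D: "((\<lambda>t. h (x + t *\<^sub>R d)) has_real_derivative (g \<bullet> d)) (at 0)"
    by (rule line_deriv[OF G])
  then have T: "((\<lambda>t. (h (x + t *\<^sub>R d) - h (x + 0 *\<^sub>R d)) / (t - 0)) \<longlongrightarrow> g \<bullet> d) (at 0)"
    using has_field_derivative_iff[THEN iffD1, OF D] by simp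
  then have T': "((\<lambda>t. (h (x + t *\<^sub>R d) - h (x + 0 *\<^sub>R d)) / (t - 0)) \<longlongrightarrow> g \<bullet> d) (at_right 0)"
    by (rule tendsto_mono[OF at_le, rotated]) simp
  have ev: "eventually (\<lambda>t. (h (x + t *\<^sub>R d) - h (x + 0 *\<^sub>R d)) / (t - 0) \<le> h z - h x) (at_right (0::real))"
    unfolding eventually_at_right_field
  proof (intro exI[of _ 1] conjI allI impI)
    fix t :: real assume t0: "0 < t" and t1: "t < 1"
    have eq: "x + t *\<^sub>R d = (1 - t) *\<^sub>R x + t *\<^sub>R z"
      by (simp add: d_def algebra_simps)
    have "h (x + t *\<^sub>R d) \<le> (1 - t) * h x + t * h z"
    proof (cases "x = z")
      case True then show ?thesis by (simp add: d_def algebra_simps)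
    next
      case False
      then show ?thesis using strict xS zS t0 t1 unfolding strictly_convex_on_def eq
        by fastforce
    qed
    then have "h (x + t *\<^sub>R d) - h x \<le> t * (h z - h x)" by (simp add: algebra_simps)
    then show "(h (x + t *\<^sub>R d) - h (x + 0 *\<^sub>R d)) / (t - 0) \<le> h z - h x"
      using t0 by (simp add: divide_le_eq mult.commute)
  qed simp
  have "g \<bullet> d \<le> h z - h x"
    by (rule tendsto_upperbound[OF T' ev]) simp
  then show ?thesis by (simp add: d_def)
qed

lemma strict_grad_ineq:
  fixes h :: "real ^ 'n::finite \<Rightarrow> real"
  assumes strict: "strictly_convex_on prob_simplex h"
    and xS: "x \<in> prob_simplex" and zS: "z \<in> prob_simplex" and ne: "x \<noteq> z"
    and G: "GDERIV h x :> g"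
  shows "g \<bullet> (z - x) < h z - h x"
proof -
  define m where "m = (1 - 1/2) *\<^sub>R x + (1/2::real) *\<^sub>R z"
  have cvx: "convex (prob_simplex :: (real^'n) set)" using strict unfolding strictly_convex_on_def by blast
  have mS: "m \<in> prob_simplex" unfolding m_def
    by (rule convexD[OF cvx xS zS]) auto
  have lt: "h m < (1 - 1/2) * h x + (1/2) * h z"
  proof -
    have "\<forall>x\<in>prob_simplex. \<forall>y\<in>prob_simplex. \<forall>t::real. x \<noteq> y \<and> 0 < t \<and> t < 1 \<longrightarrow>
        h ((1 - t) *\<^sub>R x + t *\<^sub>R y) < (1 - t) * h x + t * h y"
      using strict unfolding strictly_convex_on_def by blast
    then have A: "\<forall>t::real. x \<noteq> z \<and> 0 < t \<and> t < 1 \<longrightarrow>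
        h ((1 - t) *\<^sub>R x + t *\<^sub>R z) < (1 - t) * h x + t * h z"
      using xS zS by blast
    have P: "x \<noteq> z \<and> 0 < (1/2::real) \<and> (1/2::real) < 1" using ne by simp
    show ?thesis unfolding m_def using mp[OF spec[OF A, of "1/2"] P] .
  qed
  have "g \<bullet> (m - x) \<le> h m - h x" by (rule grad_ineq[OF strict xS mS G])
  moreover have "m - x = (1/2::real) *\<^sub>R (z - x)" by (simp add: m_def vec_eq_iff field_simps)
  ultimately have "(1/2) * (g \<bullet> (z - x)) \<le> h m - h x" by (simp add: inner_scaleR_right)
  with lt show ?thesis by (simp add: field_simps)
qed

lemma pos_in_relint:
  assumes xS: "(x :: real ^ 'n::finite) \<in> prob_simplex" and pos: "\<forall>s. 0 < x $ s"
  shows "x \<in> rel_interior prob_simplex"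
proof -
  define e where "e = Min (range (\<lambda>s. x $ s))"
  have e0: "e > 0" unfolding e_def using pos by (subst Min_gr_iff) auto
  have ele: "\<And>s. e \<le> x $ s" unfolding e_def by (rule Min_le) auto
  have aff: "affine hull prob_simplex \<subseteq> {z. (1::real^'n) \<bullet> z = 1}"
  proof (rule hull_minimal)
    show "prob_simplex \<subseteq> {z. (1::real^'n) \<bullet> z = 1}"
      by (auto simp: prob_simplex_def inner_vec_def)
  qed (rule affine_hyperplane)
  have "ball x e \<inter> affine hull prob_simplex \<subseteq> prob_simplex"
  proof
    fix z assume "z \<in> ball x e \<inter> affine hull prob_simplex"
    then have d: "dist x z < e" and s: "(1::real^'n) \<bullet> z = 1" using aff by auto
    have "\<forall>s. 0 \<le> z $ s"
    proof
      fix s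
      have "\<bar>(x - z) $ s\<bar> \<le> norm (x - z)" by (rule component_le_norm_cart)
      then have "\<bar>x $ s - z $ s\<bar> < e" using d by (simp add: dist_norm)
      with ele[of s] show "0 \<le> z $ s" by linarith
    qed
    with s show "z \<in> prob_simplex" by (simp add: prob_simplex_def inner_vec_def)
  qed
  with xS e0 show ?thesis by (auto simp: mem_rel_interior_ball)
qed

theorem lemma1:
  fixes h :: "real ^ 'n::finite \<Rightarrow> real"
    and grad_h :: "real ^ 'n \<Rightarrow> real ^ 'n"
    and s1 :: 'n
  assumes strict: "strictly_convex_on prob_simplex h"
    and grad: "\<And>x. x \<in> rel_interior prob_simplex \<Longrightarrow> GDERIV h x :> grad_h x"
    and conj_pos: "\<And>y. \<exists>x. is_conj_grad h y x \<and> (\<forall>s. 0 < x $ s)"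
  shows "bij_betw (\<lambda>x. grad_h x - (grad_h x $ s1) *\<^sub>R (1::real ^ 'n))
           (rel_interior prob_simplex) {y :: real ^ 'n. y $ s1 = 0}"
proof (rule bij_betw_imageI)
  have sub: "rel_interior prob_simplex \<subseteq> prob_simplex" by (rule rel_interior_subset)
  show "inj_on (\<lambda>x. grad_h x - (grad_h x $ s1) *\<^sub>R (1::real ^ 'n)) (rel_interior prob_simplex)"
  proof (rule inj_onI, rule ccontr)
    fix x z assume x: "x \<in> rel_interior prob_simplex" and z: "z \<in> rel_interior prob_simplex"
      and eq: "grad_h x - (grad_h x $ s1) *\<^sub>R (1::real ^ 'n) = grad_h z - (grad_h z $ s1) *\<^sub>R 1"
      and ne: "x \<noteq> z"
    have xS: "x \<in> prob_simplex" and zS: "z \<in> prob_simplex" using x z sub by auto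
    have a: "grad_h x \<bullet> (z - x) < h z - h x"
      by (rule strict_grad_ineq[OF strict xS zS ne grad[OF x]])
    have b: "grad_h z \<bullet> (x - z) < h x - h z"
      using ne by (intro strict_grad_ineq[OF strict zS xS _ grad[OF z]]) auto
    define c where "c = grad_h x $ s1 - grad_h z $ s1"
    have gd: "grad_h x - grad_h z = c *\<^sub>R 1"
      using eq unfolding c_def by (simp add: algebra_simps)
    have one0: "(1::real^'n) \<bullet> (z - x) = 0"
      using xS zS by (simp add: prob_simplex_def inner_vec_def sum_subtractf)
    have "(grad_h x - grad_h z) \<bullet> (z - x) = 0" using gd one0 by simp
    then have "grad_h x \<bullet> (z - x) + grad_h z \<bullet> (x - z) = 0"
      by (simp add: inner_diff_left inner_diff_right algebra_simps)
    with a b show False by linarith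
  qed
  show "(\<lambda>x. grad_h x - (grad_h x $ s1) *\<^sub>R (1::real ^ 'n)) ` rel_interior prob_simplex
        = {y. y $ s1 = 0}"
  proof
    show "(\<lambda>x. grad_h x - (grad_h x $ s1) *\<^sub>R (1::real ^ 'n)) ` rel_interior prob_simplex
        \<subseteq> {y. y $ s1 = 0}" by auto
  next
    show "{y. y $ s1 = 0} \<subseteq> (\<lambda>x. grad_h x - (grad_h x $ s1) *\<^sub>R (1::real ^ 'n)) ` rel_interior prob_simplex"
    proof
      fix y :: "real^'n" assume y: "y \<in> {y. y $ s1 = 0}"
      obtain x where cg: "is_conj_grad h y x" and pos: "\<forall>s. 0 < x $ s" using conj_pos by blast
      have xS: "x \<in> prob_simplex" and mx: "\<And>z. z \<in> prob_simplex \<Longrightarrow> y \<bullet> z - h z \<le> y \<bullet> x - h x"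
        using cg unfolding is_conj_grad_def is_arg_max_linorder by auto
      have xr: "x \<in> rel_interior prob_simplex" by (rule pos_in_relint[OF xS pos])
      have comp: "(y - grad_h x) $ s = (y - grad_h x) $ s1" for s
      proof -
        define d :: "real^'n" where "d = (\<chi> k. (if k = s then 1 else 0) - (if k = s1 then 1 else 0))"
        have D: "((\<lambda>t. h (x + t *\<^sub>R d)) has_real_derivative (grad_h x \<bullet> d)) (at 0)"
          by (rule line_deriv[OF grad[OF xr]])
        have Leq: "(\<lambda>t. y \<bullet> (x + t *\<^sub>R d)) = (\<lambda>t. y \<bullet> x + t * (y \<bullet> d))"
          by (simp add: inner_add_right)
        have Ly: "((\<lambda>t. y \<bullet> (x + t *\<^sub>R d)) has_real_derivative (y \<bullet> d)) (at 0)"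
          unfolding Leq by (auto intro!: derivative_eq_intros)
        have DF: "((\<lambda>t. y \<bullet> (x + t *\<^sub>R d) - h (x + t *\<^sub>R d)) has_real_derivative (y \<bullet> d - grad_h x \<bullet> d)) (at 0)"
          by (rule DERIV_diff[OF Ly D])
        define m where "m = Min (range (\<lambda>k. x $ k))"
        have m0: "m > 0" unfolding m_def using pos by (subst Min_gr_iff) auto
        have mle: "\<And>k. m \<le> x $ k" unfolding m_def by (rule Min_le) auto
        have "y \<bullet> d - grad_h x \<bullet> d = 0"
        proof (rule DERIV_local_max[OF DF m0], intro allI impI)
          fix t :: real assume "\<bar>0 - t\<bar> < m"
          then have tm: "\<bar>t\<bar> < m" by simp
          have "x + t *\<^sub>R d \<in> prob_simplex"
            unfolding prob_simplex_def
          proof (intro CollectI conjI allI)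
            fix k
            have "\<bar>d $ k\<bar> \<le> 1" by (auto simp: d_def)
            then have "\<bar>t * d $ k\<bar> \<le> \<bar>t\<bar>" by (simp add: abs_mult mult_left_le)
            then show "0 \<le> (x + t *\<^sub>R d) $ k" using mle[of k] tm by auto
          next
            have "(\<Sum>k\<in>UNIV. d $ k) = 0"
              by (simp add: d_def sum.distrib sum_subtractf)
            then have "(\<Sum>k\<in>UNIV. t * d $ k) = 0" by (simp add: sum_distrib_left[symmetric])
            then show "(\<Sum>k\<in>UNIV. (x + t *\<^sub>R d) $ k) = 1"
              using xS by (simp add: prob_simplex_def sum.distrib)
          qed
          from mx[OF this] show "y \<bullet> (x + t *\<^sub>R d) - h (x + t *\<^sub>R d) \<le> y \<bullet> (x + 0 *\<^sub>R d) - h (x + 0 *\<^sub>R d)"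
            by simp
        qed
        then have z: "(y - grad_h x) \<bullet> d = 0" by (simp add: inner_diff_left)
        have vd: "v \<bullet> d = v $ s - v $ s1" for v :: "real^'n"
        proof -
          have "v \<bullet> d = (\<Sum>k\<in>UNIV. (if k = s then v $ k else 0) - (if k = s1 then v $ k else 0))"
            unfolding d_def inner_vec_def by (intro sum.cong) auto
          also have "\<dots> = v $ s - v $ s1"
            by (simp only: sum_subtractf sum.delta finite UNIV_I if_True)
          finally show ?thesis .
        qed
        show ?thesis using z vd[of "y - grad_h x"] by linarith
      qed
      have "y = grad_h x - (grad_h x $ s1) *\<^sub>R (1::real ^ 'n)"
      proof (rule vec_eq_iff[THEN iffD2], rule allI)
        fix k show "y $ k = (grad_h x - (grad_h x $ s1) *\<^sub>R (1::real ^ 'n)) $ k"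
          using comp[of k] y by (simp add: algebra_simps)
      qed
      with xr show "y \<in> (\<lambda>x. grad_h x - (grad_h x $ s1) *\<^sub>R (1::real ^ 'n)) ` rel_interior prob_simplex"
        by blast
    qed
  qed
qed

end
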